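(* Let $X_1,\dots,X_n$ be i.i.d. exponential random variables with mean $1$, let $X_{(1)}=\min_i X_i$, and let $\eta_{(1)}$ be the smallest critical point of $P_n(z)=(z-X_1)\cdots(z-X_n)$. Then $n\log n\,(\eta_{(1)}-X_{(1)})\to1$ in probability as $n\to\infty$.
   Context: Critical points are zeros of $P_n'$; they are all real since $P_n$ has only real zeros. *)

theory Defs
  imports "HOL-Probability.Probability" "HOL-Computational_Algebra.Polynomial"
begin

definition sample_poly :: "(nat \<Rightarrow> real) \<Rightarrow> nat \<Rightarrow> real poly" where
  "sample_poly x n = (\<Prod>i<n. [:- x i, 1:])"

definition smallest_critical_point :: "(nat \<Rightarrow> real) \<Rightarrow> nat \<Rightarrow> real" where
  "smallest_critical_point x n = Min {z. poly (pderiv (sample_poly x n)) z = 0}"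

end

theory Submission
  imports Defs "HOL-Real_Asymp.Real_Asymp"
begin


lemma poly_sample: "poly (sample_poly x n) z = (\<Prod>i<n. z - x i)"
  by (simp add: sample_poly_def poly_prod)

lemma poly_pderiv_sample:
  "poly (pderiv (sample_poly x n)) z = (\<Sum>i<n. \<Prod>j\<in>{..<n}-{i}. z - x j)"
  by (simp add: sample_poly_def pderiv_prod poly_sum poly_prod pderiv_pCons)

lemma pderiv_eq_F:
  assumes "\<And>i. i < n \<Longrightarrow> z \<noteq> x i"
  shows "poly (pderiv (sample_poly x n)) z = poly (sample_poly x n) z * (\<Sum>i<n. 1 / (z - x i))"
proof -
  have "poly (sample_poly x n) z * (\<Sum>i<n. 1 / (z - x i)) = (\<Sum>i<n. (\<Prod>j<n. z - x j) / (z - x i))"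
    by (simp add: poly_sample sum_distrib_left)
  also have "\<dots> = (\<Sum>i<n. \<Prod>j\<in>{..<n}-{i}. z - x j)"
  proof (rule sum.cong)
    fix i assume "i \<in> {..<n}"
    then have "(\<Prod>j<n. z - x j) = (z - x i) * (\<Prod>j\<in>{..<n}-{i}. z - x j)"
      by (simp add: prod.remove)
    then show "(\<Prod>j<n. z - x j) / (z - x i) = (\<Prod>j\<in>{..<n}-{i}. z - x j)"
      using assms \<open>i \<in> {..<n}\<close> by simp
  qed simp
  finally show ?thesis by (simp add: poly_pderiv_sample)
qed

lemma crit_point:
  fixes x :: "nat \<Rightarrow> real"
  assumes k: "k < n" and xk: "x k = m" and sep: "\<And>i. i < n \<Longrightarrow> i \<noteq> k \<Longrightarrow> m + G \<le> x i"
    and a: "0 < a" and ab: "a < b" and bG: "b < G"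
    and S_def: "S = (\<Sum>i\<in>{..<n}-{k}. 1 / (x i - m))"
    and lowS: "a * S < 1 - a / G" and upS: "1 < b * S"
  shows "m + a < smallest_critical_point x n \<and> smallest_critical_point x n \<le> m + b"
proof -
  define pd where "pd z = poly (pderiv (sample_poly x n)) z" for z
  define F where "F z = (\<Sum>i<n. 1 / (z - x i))" for z
  have G: "0 < G" using a ab bG by linarith
  have xge: "m \<le> x i" if "i < n" for i using sep[OF that] xk G by (cases "i = k") auto
  have Fsplit: "F z = 1 / (z - m) - (\<Sum>i\<in>{..<n}-{k}. 1 / (x i - z))" for z
  proof -
    have "F z = 1 / (z - x k) + (\<Sum>i\<in>{..<n}-{k}. 1 / (z - x i))"
      unfolding F_def using k by (simp add: sum.remove)
    also have "(\<Sum>i\<in>{..<n}-{k}. 1 / (z - x i)) = - (\<Sum>i\<in>{..<n}-{k}. 1 / (x i - z))"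
      by (simp add: sum_negf[symmetric] minus_divide_right)
    finally show ?thesis using xk by simp
  qed
  have pdF: "pd z = poly (sample_poly x n) z * F z" if "\<And>i. i < n \<Longrightarrow> z \<noteq> x i" for z
    unfolding pd_def F_def by (rule pderiv_eq_F) (use that in auto)
  have Pnz: "poly (sample_poly x n) z \<noteq> 0" if "\<And>i. i < n \<Longrightarrow> z \<noteq> x i" for z
    using that by (auto simp: poly_sample)
  have Fpos: "F z > 0" if "m < z" "z \<le> m + a" for z
  proof -
    have aG: "0 < 1 - a / G" using a ab bG G by (simp add: field_simps)
    have "(\<Sum>i\<in>{..<n}-{k}. 1 / (x i - z)) \<le> (\<Sum>i\<in>{..<n}-{k}. (1 / (x i - m)) / (1 - a / G))"
    proof (rule sum_mono)
      fix i assume i: "i \<in> {..<n}-{k}"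
      then have xi: "m + G \<le> x i" using sep by auto
      have "(x i - m) * (1 - a / G) \<le> x i - z"
      proof -
        have "a * G \<le> a * (x i - m)" using xi a by (intro mult_left_mono) auto
        then have "(x i - m) * (a / G) \<ge> a"
          using G by (simp add: field_simps mult.commute)
        then show ?thesis using that by (simp add: algebra_simps)
      qed
      moreover have "0 < (x i - m) * (1 - a / G)" using xi G aG by simp
      ultimately show "1 / (x i - z) \<le> (1 / (x i - m)) / (1 - a / G)"
        by (simp add: divide_simps mult.commute)
    qed
    also have "\<dots> = S / (1 - a / G)" by (simp add: S_def sum_divide_distrib)
    also have "\<dots> < 1 / a" using lowS aG a by (simp add: field_simps)
    also have "1 / a \<le> 1 / (z - m)" using that a by (simp add: frac_le)
    finally show ?thesis by (simp add: Fsplit)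
  qed
  have noroot: "pd z \<noteq> 0" if "z \<le> m + a" for z
  proof (cases "z < m")
    case True
    have nz: "\<And>i. i < n \<Longrightarrow> z \<noteq> x i" using xge True by fastforce
    have "0 < (\<Sum>i<n. 1 / (x i - z))"
      by (rule sum_pos) (use k xge True in \<open>fastforce+\<close>)
    moreover have "F z = - (\<Sum>i<n. 1 / (x i - z))"
      unfolding F_def by (simp add: sum_negf[symmetric] minus_divide_right)
    ultimately have "F z < 0" by simp
    then show ?thesis using pdF[OF nz] Pnz[OF nz] by simp
  next
    case False
    show ?thesis
    proof (cases "z = m")
      case True
      have "pd z = (\<Prod>j\<in>{..<n}-{k}. z - x j) + (\<Sum>i\<in>{..<n}-{k}. \<Prod>j\<in>{..<n}-{i}. z - x j)"
        unfolding pd_def poly_pderiv_sample using k by (simp add: sum.remove)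
      moreover have "(\<Sum>i\<in>{..<n}-{k}. \<Prod>j\<in>{..<n}-{i}. z - x j) = 0"
      proof (rule sum.neutral, intro ballI)
        fix i assume "i \<in> {..<n}-{k}"
        then have "k \<in> {..<n}-{i}" using k by auto
        then show "(\<Prod>j\<in>{..<n}-{i}. z - x j) = 0"
          using True xk by (intro prod_zero) auto
      qed
      moreover have "(\<Prod>j\<in>{..<n}-{k}. z - x j) \<noteq> 0"
      proof -
        have "\<forall>j\<in>{..<n}-{k}. z - x j \<noteq> 0"
        proof
          fix j assume "j \<in> {..<n}-{k}"
          then have "m + G \<le> x j" using sep by auto
          then show "z - x j \<noteq> 0" using G True by simp
        qed
        then show ?thesis by (simp add: prod_zero_iff)
      qed
      ultimately show ?thesis by simp
    next
      case False2: False
      with False have zm: "m < z" by simp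
      have nz: "\<And>i. i < n \<Longrightarrow> z \<noteq> x i"
        using sep xk zm that a ab bG by (metis add_le_cancel_left dual_order.strict_trans1 le_less_trans less_irrefl less_le_not_le order.strict_implies_order)
      show ?thesis using pdF[OF nz] Pnz[OF nz] Fpos[OF zm that] by simp
    qed
  qed
  have nzI: "\<And>i. i < n \<Longrightarrow> z \<noteq> x i" if "m + a \<le> z" "z \<le> m + b" for z
    using that sep xk a bG by (metis add_le_cancel_left add_less_cancel_left less_add_same_cancel1 linorder_not_le order_le_less_trans)
  have Fa: "F (m + a) > 0" using Fpos[of "m + a"] a by simp
  have Fb: "F (m + b) < 0"
  proof -
    have "S \<le> (\<Sum>i\<in>{..<n}-{k}. 1 / (x i - (m + b)))" unfolding S_def
    proof (rule sum_mono)
      fix i assume "i \<in> {..<n}-{k}"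
      then have "m + G \<le> x i" using sep by auto
      then show "1 / (x i - m) \<le> 1 / (x i - (m + b))" using bG a ab
        by (intro frac_le) auto
    qed
    moreover have "1 / b < S" using upS a ab by (simp add: field_simps)
    ultimately show ?thesis by (simp add: Fsplit)
  qed
  have cont: "continuous_on {m+a..m+b} F"
    unfolding F_def
    by (intro continuous_intros) (use nzI in fastforce)
  obtain r where r: "m + a \<le> r" "r \<le> m + b" "F r = 0"
    using IVT2'[of F "m+b" 0 "m+a", OF less_imp_le[OF Fb] less_imp_le[OF Fa] _ cont] ab by auto
  have pdr: "pd r = 0" using pdF[OF nzI[OF r(1,2)]] r(3) by simp
  have pnz: "pderiv (sample_poly x n) \<noteq> 0"
    using noroot[of m] a unfolding pd_def by auto
  define R where "R = {z. poly (pderiv (sample_poly x n)) z = 0}"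
  have finR: "finite R" unfolding R_def by (rule poly_roots_finite[OF pnz])
  have rR: "r \<in> R" using pdr unfolding R_def pd_def by simp
  have scp: "smallest_critical_point x n = Min R" unfolding smallest_critical_point_def R_def ..
  have "Min R \<le> r" using finR rR by simp
  moreover have "Min R \<in> R" using finR rR by (intro Min_in) auto
  then have "m + a < Min R" using noroot unfolding R_def pd_def by (metis (mono_tags) mem_Collect_eq not_le)
  ultimately show ?thesis using r scp by simp
qed




lemma int_upper:
  fixes c :: real
  assumes c: "0 < c" "c \<le> 1"
  shows "integral\<^sup>L lborel (\<lambda>x. indicator {c..1} x * (1/x + c/x^2)) = 1 - c - ln c"
    and "integrable lborel (\<lambda>x. indicator {c..1} x * (1/x + c/x^2))"
proof -
  have "integral\<^sup>L lborel (\<lambda>x. indicator {c..1} x *\<^sub>R (1/x + c/x^2)) = (ln 1 - c / 1) - (ln c - c / c)"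
  proof (rule integral_FTC_atLeastAtMost[where F="\<lambda>x. ln x - c / x"])
    fix x assume x: "c \<le> x" "x \<le> 1"
    then have "x > 0" using c by simp
    then have "((\<lambda>x. ln x - c / x) has_real_derivative (1/x + c/x^2)) (at x within {c..1})"
      by (auto intro!: derivative_eq_intros simp: power2_eq_square field_simps)
    then show "((\<lambda>x. ln x - c / x) has_vector_derivative (1/x + c/x^2)) (at x within {c..1})"
      by (simp add: has_real_derivative_iff_has_vector_derivative)
  next
    show "continuous_on {c..1} (\<lambda>x. 1/x + c/x^2)" using c by (intro continuous_intros) auto
  qed (use c in auto)
  then show "integral\<^sup>L lborel (\<lambda>x. indicator {c..1} x * (1/x + c/x^2)) = 1 - c - ln c" using c by simp
  show "integrable lborel (\<lambda>x. indicator {c..1} x * (1/x + c/x^2))"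
    using borel_integrable_atLeastAtMost[of c 1 "\<lambda>x. 1/x + c/x^2"] c
    by (auto intro!: continuous_intros simp: mult.commute)
qed

lemma int_lower:
  fixes c :: real
  assumes c: "0 < c" "c \<le> 1"
  shows "integral\<^sup>L lborel (\<lambda>x. indicator {c..1} x * (1/x - 1)) = c - 1 - ln c"
    and "integrable lborel (\<lambda>x. indicator {c..1} x * (1/x - 1))"
proof -
  have "integral\<^sup>L lborel (\<lambda>x. indicator {c..1} x *\<^sub>R (1/x - 1)) = (ln 1 - 1) - (ln c - c)"
  proof (rule integral_FTC_atLeastAtMost[where F="\<lambda>x. ln x - x"])
    fix x assume x: "c \<le> x" "x \<le> 1"
    then have "x > 0" using c by simp
    then have "((\<lambda>x. ln x - x) has_real_derivative (1/x - 1)) (at x within {c..1})"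
      by (auto intro!: derivative_eq_intros simp: field_simps)
    then show "((\<lambda>x. ln x - x) has_vector_derivative (1/x - 1)) (at x within {c..1})"
      by (simp add: has_real_derivative_iff_has_vector_derivative)
  next
    show "continuous_on {c..1} (\<lambda>x. 1/x - 1)" using c by (intro continuous_intros) auto
  qed (use c in auto)
  then show "integral\<^sup>L lborel (\<lambda>x. indicator {c..1} x * (1/x - 1)) = c - 1 - ln c" using c by simp
  show "integrable lborel (\<lambda>x. indicator {c..1} x * (1/x - 1))"
    using borel_integrable_atLeastAtMost[of c 1 "\<lambda>x. 1/x - 1"] c
    by (auto intro!: continuous_intros simp: mult.commute)
qed


locale expsample = prob_space M for M :: "'a measure" +
  fixes X :: "nat \<Rightarrow> 'a \<Rightarrow> real"
  assumes indep: "indep_vars (\<lambda>_. borel) X UNIV"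
  and dist: "\<And>i. distributed M lborel (X i) (exponential_density 1)"
begin

lemma rv[measurable]: "X i \<in> borel_measurable M"
  using distributed_measurable[OF dist[of i]] by simp

definition E0 :: "(real \<Rightarrow> real) \<Rightarrow> real" where
  "E0 g = (\<integral>x. exponential_density 1 x * g x \<partial>lborel)"

lemma integrable_bnd:
  assumes [measurable]: "g \<in> borel_measurable borel" and B: "\<And>x. \<bar>g x\<bar> \<le> (B::real)"
  shows "integrable M (\<lambda>\<omega>. g (X i \<omega>))"
  by (rule integrable_const_bound[where B=B]) (use B in auto)

lemma Eg:
  assumes [measurable]: "g \<in> borel_measurable borel"
  shows "expectation (\<lambda>\<omega>. g (X i \<omega>)) = E0 g"
  unfolding E0_def
  by (rule distributed_integral[OF dist, symmetric]) (auto simp: exponential_density_nonneg)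

lemma integrable_E0:
  assumes [measurable]: "g \<in> borel_measurable borel" and B: "\<And>x. \<bar>g x\<bar> \<le> (B::real)"
  shows "integrable lborel (\<lambda>x. exponential_density 1 x * g x)"
  using distributed_integrable[OF dist[of 0], of g] integrable_bnd[OF assms, of 0] by simp

lemma pair_indep:
  assumes "i \<noteq> j"
  shows "indep_var borel (X i) borel (X j)"
proof -
  have "indep_var borel ((\<lambda>f. f i) \<circ> (\<lambda>\<omega>. restrict (\<lambda>i. X i \<omega>) {i}))
    borel ((\<lambda>f. f j) \<circ> (\<lambda>\<omega>. restrict (\<lambda>i. X i \<omega>) {j}))"
    using assms by (intro indep_var_compose[OF indep_var_restrict[OF indep]]) auto
  also have "((\<lambda>f. f i) \<circ> (\<lambda>\<omega>. restrict (\<lambda>i. X i \<omega>) {i})) = X i" by auto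
  also have "((\<lambda>f. f j) \<circ> (\<lambda>\<omega>. restrict (\<lambda>i. X i \<omega>) {j})) = X j" by auto
  finally show ?thesis .
qed

lemma pair_E:
  assumes "i \<noteq> j" and [measurable]: "g \<in> borel_measurable borel" "h \<in> borel_measurable borel"
    and B: "\<And>x. \<bar>g x\<bar> \<le> (B::real)" "\<And>x. \<bar>h x\<bar> \<le> B"
  shows "expectation (\<lambda>\<omega>. g (X i \<omega>) * h (X j \<omega>)) = E0 g * E0 h"
proof -
  have "indep_var borel (g \<circ> X i) borel (h \<circ> X j)"
    by (rule indep_var_compose[OF pair_indep[OF assms(1)]]) auto
  then have "expectation (\<lambda>\<omega>. (g \<circ> X i) \<omega> * (h \<circ> X j) \<omega>) =
     expectation (g \<circ> X i) * expectation (h \<circ> X j)"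
    by (rule indep_var_lebesgue_integral)
      (auto simp: comp_def intro: integrable_bnd[OF _ B(1)] integrable_bnd[OF _ B(2)])
  then show ?thesis by (simp add: comp_def Eg)
qed

lemma var_bound:
  assumes [measurable]: "g \<in> borel_measurable borel" and g0: "\<And>x. 0 \<le> g x" and gB: "\<And>x. g x \<le> B"
  shows "expectation (\<lambda>\<omega>. (g (X i \<omega>) - E0 g)^2) \<le> B * E0 g"
proof -
  define \<mu> where "\<mu> = E0 g"
  have B0: "0 \<le> B" using g0[of 0] gB[of 0] by simp
  have bg: "\<And>x. \<bar>g x\<bar> \<le> B" using g0 gB by (simp add: abs_of_nonneg)
  have bg2: "\<And>x. \<bar>(g x)^2\<bar> \<le> B^2" using g0 gB by (simp add: power_mono)
  have i1: "integrable M (\<lambda>\<omega>. g (X i \<omega>))" by (rule integrable_bnd[OF _ bg]) simp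
  have i2: "integrable M (\<lambda>\<omega>. (g (X i \<omega>))^2)" by (rule integrable_bnd[OF _ bg2]) simp
  have "expectation (\<lambda>\<omega>. (g (X i \<omega>) - \<mu>)^2) =
      expectation (\<lambda>\<omega>. (g (X i \<omega>))^2 - 2 * \<mu> * g (X i \<omega>) + \<mu>^2)"
    by (rule Bochner_Integration.integral_cong) (auto simp: power2_eq_square algebra_simps)
  also have "\<dots> = expectation (\<lambda>\<omega>. (g (X i \<omega>))^2) - 2 * \<mu> * expectation (\<lambda>\<omega>. g (X i \<omega>)) + \<mu>^2"
    using i1 i2 by (simp add: prob_space)
  finally have e1: "expectation (\<lambda>\<omega>. (g (X i \<omega>) - \<mu>)^2) = expectation (\<lambda>\<omega>. (g (X i \<omega>))^2) - 2 * \<mu> * expectation (\<lambda>\<omega>. g (X i \<omega>)) + \<mu>^2" .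
  have e2: "expectation (\<lambda>\<omega>. g (X i \<omega>)) = \<mu>" unfolding \<mu>_def by (simp add: Eg)
  have "expectation (\<lambda>\<omega>. (g (X i \<omega>))^2) \<le> expectation (\<lambda>\<omega>. B * g (X i \<omega>))"
    by (rule integral_mono[OF i2]) (use i1 g0 gB B0 in \<open>auto simp: power2_eq_square intro: mult_right_mono\<close>)
  also have "expectation (\<lambda>\<omega>. B * g (X i \<omega>)) = B * \<mu>" unfolding \<mu>_def by (simp add: Eg)
  finally have e3: "expectation (\<lambda>\<omega>. (g (X i \<omega>))^2) \<le> B * \<mu>" .
  have "expectation (\<lambda>\<omega>. (g (X i \<omega>) - \<mu>)^2) = expectation (\<lambda>\<omega>. (g (X i \<omega>))^2) - \<mu>^2"
    using e1 e2 by (simp add: power2_eq_square)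
  with e3 have "expectation (\<lambda>\<omega>. (g (X i \<omega>) - \<mu>)^2) \<le> B * \<mu> - \<mu>^2" by linarith
  then show ?thesis unfolding \<mu>_def using zero_le_power2[of "E0 g"] by linarith
qed

lemma E0_centered:
  assumes [measurable]: "g \<in> borel_measurable borel" and bg: "\<And>x. \<bar>g x\<bar> \<le> B"
  shows "E0 (\<lambda>x. g x - E0 g) = 0"
proof -
  have "E0 (\<lambda>x. g x - E0 g) = expectation (\<lambda>\<omega>. g (X 0 \<omega>) - E0 g)" by (rule Eg[symmetric]) simp
  also have "\<dots> = expectation (\<lambda>\<omega>. g (X 0 \<omega>)) - E0 g"
    using integrable_bnd[where g=g and B=B and i=0, OF assms(1) bg] by (simp add: prob_space)
  finally show ?thesis using Eg[of g 0] by simp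
qed


lemma cheb_sum:
  assumes [measurable]: "g \<in> borel_measurable borel" and g0: "\<And>x. 0 \<le> g x" and gB: "\<And>x. g x \<le> B"
    and t: "0 < t"
  shows "prob {\<omega>\<in>space M. t \<le> \<bar>(\<Sum>i<n. g (X i \<omega>)) - real n * E0 g\<bar>} \<le> real n * B * E0 g / t^2"
proof -
  define \<mu> where "\<mu> = E0 g"
  define f where "f \<omega> = (\<Sum>i<n. g (X i \<omega>))" for \<omega>
  define Z where "Z i \<omega> = g (X i \<omega>) - \<mu>" for i \<omega>
  have B0: "0 \<le> B" using g0[of 0] gB[of 0] by simp
  have bg: "\<And>x. \<bar>g x\<bar> \<le> B" using g0 gB by (simp add: abs_of_nonneg)
  have bgc: "\<bar>g x - \<mu>\<bar> \<le> B + \<bar>\<mu>\<bar>" for x using abs_triangle_ineq4[of "g x" \<mu>] bg[of x] by linarith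
  have i1: "\<And>i. integrable M (\<lambda>\<omega>. g (X i \<omega>))" by (rule integrable_bnd[OF _ bg]) simp
  have fm[measurable]: "f \<in> borel_measurable M" unfolding f_def by measurable
  have Ef: "expectation f = real n * \<mu>"
    unfolding f_def \<mu>_def by (subst Bochner_Integration.integral_sum) (auto simp: i1 Eg)
  have fb: "\<bar>(f \<omega>)^2\<bar> \<le> (real n * B)^2" for \<omega>
  proof -
    have "0 \<le> f \<omega>" unfolding f_def by (intro sum_nonneg) (simp add: g0)
    moreover have "f \<omega> \<le> real n * B" unfolding f_def
      using sum_mono[of "{..<n}" "\<lambda>i. g (X i \<omega>)" "\<lambda>i. B"] gB by simp
    ultimately show ?thesis by (simp add: power_mono)
  qed
  have if2: "integrable M (\<lambda>x. (f x)^2)"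
    by (rule integrable_const_bound[where B="(real n * B)^2"]) (use fb in auto)
  have cheb: "prob {x\<in>space M. \<bar>f x - expectation f\<bar> \<ge> t} \<le> variance f / t\<^sup>2"
    by (rule Chebyshev_inequality[OF fm if2 t])
  have iZ: "integrable M (\<lambda>\<omega>. Z i \<omega> * Z j \<omega>)" for i j
  proof (rule integrable_const_bound[where B="(B+\<bar>\<mu>\<bar>)^2"])
    show "AE x in M. norm (Z i x * Z j x) \<le> (B + \<bar>\<mu>\<bar>)\<^sup>2"
    proof (rule AE_I2)
      fix x
      have "\<bar>Z i x\<bar> * \<bar>Z j x\<bar> \<le> (B + \<bar>\<mu>\<bar>) * (B + \<bar>\<mu>\<bar>)"
        unfolding Z_def by (rule mult_mono) (auto intro: bgc simp: B0 add_nonneg_nonneg)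
      then show "norm (Z i x * Z j x) \<le> (B + \<bar>\<mu>\<bar>)\<^sup>2" by (simp add: abs_mult power2_eq_square)
    qed
  qed (simp add: Z_def)
  have EZ: "expectation (\<lambda>\<omega>. Z i \<omega> * Z j \<omega>) = (if i = j then expectation (\<lambda>\<omega>. (g (X i \<omega>) - E0 g)^2) else 0)" for i j
  proof (cases "i = j")
    case True then show ?thesis by (simp add: Z_def \<mu>_def power2_eq_square)
  next
    case False
    have "expectation (\<lambda>\<omega>. Z i \<omega> * Z j \<omega>) = E0 (\<lambda>x. g x - E0 g) * E0 (\<lambda>x. g x - E0 g)"
      unfolding Z_def \<mu>_def by (rule pair_E[OF False _ _ bgc[unfolded \<mu>_def] bgc[unfolded \<mu>_def]]) auto
    then show ?thesis using False E0_centered[OF _ bg] by simp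
  qed
  have "variance f = expectation (\<lambda>\<omega>. (\<Sum>i<n. Z i \<omega>)^2)"
    unfolding Ef f_def Z_def by (simp add: sum_subtractf)
  also have "\<dots> = expectation (\<lambda>\<omega>. \<Sum>i<n. \<Sum>j<n. Z i \<omega> * Z j \<omega>)"
    by (simp add: power2_eq_square sum_product)
  also have "\<dots> = (\<Sum>i<n. \<Sum>j<n. expectation (\<lambda>\<omega>. Z i \<omega> * Z j \<omega>))"
    by (simp add: Bochner_Integration.integral_sum iZ)
  also have "\<dots> = (\<Sum>i<n. expectation (\<lambda>\<omega>. (g (X i \<omega>) - E0 g)^2))"
    by (simp add: EZ)
  also have "\<dots> \<le> (\<Sum>i<n. B * E0 g)"
    by (intro sum_mono var_bound) (auto simp: g0 gB)
  finally have "variance f \<le> real n * B * E0 g" by simp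
  then have "variance f / t^2 \<le> real n * B * E0 g / t^2"
    using t by (simp add: divide_right_mono)
  with cheb show ?thesis unfolding Ef f_def \<mu>_def by (simp add: abs_minus_commute)
qed


lemma prob_le: "0 \<le> c \<Longrightarrow> prob {\<omega>\<in>space M. X i \<omega> \<le> c} = 1 - exp (- c)"
  using exponential_distributedD_le[OF dist[of i], of c] by simp

lemma prob_le0: "prob {\<omega>\<in>space M. X i \<omega> \<le> 0} = 0"
  using prob_le[of 0 i] by simp

lemma one_minus_exp_le: "0 \<le> t \<Longrightarrow> 1 - exp (- t) \<le> (t::real)"
  using exp_ge_add_one_self[of "-t"] by linarith

lemma prob_int:
  assumes ab: "a \<le> b"
  shows "prob {\<omega>\<in>space M. a < X i \<omega> \<and> X i \<omega> \<le> b} \<le> b - a"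
proof (cases "0 \<le> a")
  case True
  have "{\<omega>\<in>space M. a < X i \<omega> \<and> X i \<omega> \<le> b} = {\<omega>\<in>space M. X i \<omega> \<le> b} - {\<omega>\<in>space M. X i \<omega> \<le> a}"
    by auto
  also have "prob \<dots> = prob {\<omega>\<in>space M. X i \<omega> \<le> b} - prob {\<omega>\<in>space M. X i \<omega> \<le> a}"
    by (rule finite_measure_Diff) (use ab in auto)
  also have "\<dots> = exp (- a) - exp (- b)" using True ab by (simp add: prob_le)
  also have "\<dots> = exp (- a) * (1 - exp (- (b - a)))" by (simp add: algebra_simps exp_diff exp_minus field_simps)
  also have "\<dots> \<le> 1 * (b - a)"
    by (rule mult_mono) (use True ab one_minus_exp_le[of "b - a"] in auto)
  finally show ?thesis by simp
next
  case False
  show ?thesis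
  proof (cases "0 \<le> b")
    case True
    have "prob {\<omega>\<in>space M. a < X i \<omega> \<and> X i \<omega> \<le> b} \<le> prob {\<omega>\<in>space M. X i \<omega> \<le> b}"
      by (rule finite_measure_mono) auto
    also have "\<dots> = 1 - exp (- b)" using True by (simp add: prob_le)
    also have "\<dots> \<le> b" using one_minus_exp_le True by simp
    finally show ?thesis using False by simp
  next
    case False2: False
    have "prob {\<omega>\<in>space M. a < X i \<omega> \<and> X i \<omega> \<le> b} \<le> prob {\<omega>\<in>space M. X i \<omega> \<le> 0}"
      by (rule finite_measure_mono) (use False2 in auto)
    then show ?thesis using prob_le0[of i] ab by simp
  qed
qed

lemma prob_pair:
  assumes ij: "i \<noteq> j" and ab: "a \<le> b"
  shows "prob {\<omega>\<in>space M. (a < X i \<omega> \<and> X i \<omega> \<le> b) \<and> (a < X j \<omega> \<and> X j \<omega> \<le> b)} \<le> (b - a)^2"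
proof -
  have "prob ((\<lambda>x. (X i x, X j x)) -` ({a<..b} \<times> {a<..b}) \<inter> space M) =
    prob (X i -` {a<..b} \<inter> space M) * prob (X j -` {a<..b} \<inter> space M)"
    by (rule indep_varD[OF pair_indep[OF ij]]) auto
  moreover have "(\<lambda>x. (X i x, X j x)) -` ({a<..b} \<times> {a<..b}) \<inter> space M =
     {\<omega>\<in>space M. (a < X i \<omega> \<and> X i \<omega> \<le> b) \<and> (a < X j \<omega> \<and> X j \<omega> \<le> b)}" by auto
  moreover have "X i -` {a<..b} \<inter> space M = {\<omega>\<in>space M. a < X i \<omega> \<and> X i \<omega> \<le> b}" for i by auto
  ultimately have "prob {\<omega>\<in>space M. (a < X i \<omega> \<and> X i \<omega> \<le> b) \<and> (a < X j \<omega> \<and> X j \<omega> \<le> b)} =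
     prob {\<omega>\<in>space M. a < X i \<omega> \<and> X i \<omega> \<le> b} * prob {\<omega>\<in>space M. a < X j \<omega> \<and> X j \<omega> \<le> b}" by simp
  also have "\<dots> \<le> (b - a) * (b - a)"
    by (rule mult_mono) (auto intro: prob_int[OF ab] simp: ab)
  finally show ?thesis by (simp add: power2_eq_square)
qed

lemma E0_ind:
  assumes "0 \<le> c"
  shows "E0 (indicator {..c}) = 1 - exp (- c)"
proof -
  have "E0 (indicator {..c}) = expectation (\<lambda>\<omega>. indicator {..c} (X 0 \<omega>))"
    by (rule Eg[symmetric]) simp
  also have "\<dots> = expectation (indicator {\<omega>\<in>space M. X 0 \<omega> \<le> c})"
    by (rule Bochner_Integration.integral_cong) (auto simp: indicator_def)
  also have "\<dots> = prob {\<omega>\<in>space M. X 0 \<omega> \<le> c}"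
    by (subst Bochner_Integration.integral_indicator) (auto intro!: arg_cong[where f=prob])
  finally show ?thesis using prob_le[OF assms] by simp
qed


lemma E0_one: "E0 (\<lambda>_. 1) = 1"
  using Eg[of "\<lambda>_. 1" 0] by (simp add: prob_space)

lemma dens_int: "integrable lborel (exponential_density 1)"
  using integrable_E0[of "\<lambda>_. 1" 1] by simp

lemma E0_gU:
  assumes c: "0 < c" "c \<le> 1"
  shows "E0 (\<lambda>x. if c \<le> x then 1/x + c/x^2 else 0) \<le> 3 - ln c"
proof -
  define g where "g x = (if c \<le> x then 1/x + c/x^2 else 0)" for x
  have gm[measurable]: "g \<in> borel_measurable borel" unfolding g_def by measurable
  have gb: "\<bar>g x\<bar> \<le> 2 / c" for x
  proof (cases "c \<le> x")
    case True
    then have x0: "0 < x" using c by simp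
    have "1/x \<le> 1/c" using True c by (simp add: frac_le)
    moreover have "c/x^2 \<le> 1/c"
    proof -
      have "c * c \<le> x^2" using True c by (simp add: power2_eq_square mult_mono)
      then show ?thesis using x0 c by (simp add: field_simps)
    qed
    moreover have "0 \<le> 1/x + c/x^2" using x0 c by simp
    ultimately show ?thesis using True by (simp add: g_def)
  qed (use c in \<open>simp add: g_def\<close>)
  have "E0 g \<le> integral\<^sup>L lborel (\<lambda>x. indicator {c..1} x * (1/x + c/x^2) + 2 * exponential_density 1 x)"
    unfolding E0_def
  proof (rule integral_mono)
    show "integrable lborel (\<lambda>x. exponential_density 1 x * g x)" by (rule integrable_E0[OF gm gb])
    show "integrable lborel (\<lambda>x. indicator {c..1} x * (1/x + c/x^2) + 2 * exponential_density 1 x)"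
      using int_upper(2)[OF c] dens_int by simp
    fix x
    show "exponential_density 1 x * g x \<le> indicator {c..1} x * (1/x + c/x^2) + 2 * exponential_density 1 x"
    proof (cases "c \<le> x")
      case False then show ?thesis by (simp add: g_def exponential_density_nonneg)
    next
      case True
      then have x0: "0 < x" using c by simp
      show ?thesis
      proof (cases "x \<le> 1")
        case True
        have "exp (- x) * (1/x + c/x^2) \<le> 1 * (1/x + c/x^2)"
          by (rule mult_right_mono) (use x0 c in auto)
        then show ?thesis using True \<open>c \<le> x\<close> x0 using exp_gt_zero[of "-x"] by (simp add: g_def indicator_def exponential_density_def) (use exp_gt_zero[of "-x"] in linarith)
      next
        case False
        have "1/x + c/x^2 \<le> 2"
        proof -
          have "1/x \<le> 1" using False by simp
          moreover have "c/x^2 \<le> 1" using False c by (simp add: field_simps power2_eq_square) (smt (verit) mult_le_cancel_right1 mult_mono)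
          ultimately show ?thesis by simp
        qed
        then have "exp (- x) * (1/x + c/x^2) \<le> exp (- x) * 2" by (rule mult_left_mono) simp
        then show ?thesis using False \<open>c \<le> x\<close> x0 by (simp add: g_def indicator_def mult.commute exponential_density_def)
      qed
    qed
  qed
  also have "\<dots> = (1 - c - ln c) + 2 * 1"
    using int_upper[OF c] dens_int E0_one unfolding E0_def by simp
  finally show ?thesis using c unfolding g_def by simp
qed

lemma E0_gL:
  assumes c: "0 < c" "c \<le> 1"
  shows "E0 (\<lambda>x. if c \<le> x then 1/x else 0) \<ge> - 1 - ln c"
proof -
  define g where "g x = (if c \<le> x then 1/x else 0)" for x
  have gm[measurable]: "g \<in> borel_measurable borel" unfolding g_def by measurable
  have gb: "\<bar>g x\<bar> \<le> 1 / c" for x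
    using c by (auto simp: g_def frac_le)
  have "integral\<^sup>L lborel (\<lambda>x. indicator {c..1} x * (1/x - 1)) \<le> E0 g"
    unfolding E0_def
  proof (rule integral_mono)
    show "integrable lborel (\<lambda>x. exponential_density 1 x * g x)" by (rule integrable_E0[OF gm gb])
    show "integrable lborel (\<lambda>x. indicator {c..1} x * (1/x - 1))"
      using int_lower(2)[OF c] by simp
    fix x
    show "indicator {c..1} x * (1/x - 1) \<le> exponential_density 1 x * g x"
    proof (cases "c \<le> x \<and> x \<le> 1")
      case False
      then show ?thesis using c by (auto simp: g_def indicator_def exponential_density_nonneg)
    next
      case True
      then have x0: "0 < x" using c by simp
      have "(1 - x) / x \<le> exp (- x) / x"
        using exp_ge_add_one_self[of "-x"] x0 by (intro divide_right_mono) auto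
      then show ?thesis using True x0 by (simp add: g_def indicator_def diff_divide_distrib exponential_density_def)
    qed
  qed
  then show ?thesis using int_lower(1)[OF c] c unfolding g_def by simp
qed

end



definition gU :: "real \<Rightarrow> real \<Rightarrow> real" where
  "gU c = (\<lambda>x. if c \<le> x then 1/x + c/x^2 else 0)"
definition gL :: "real \<Rightarrow> real \<Rightarrow> real" where
  "gL c = (\<lambda>x. if c \<le> x then 1/x else 0)"

lemma gU_meas[measurable]: "gU c \<in> borel_measurable borel"
  unfolding gU_def by measurable
lemma gL_meas[measurable]: "gL c \<in> borel_measurable borel"
  unfolding gL_def by measurable

lemma gU_bnd: assumes "0 < c" shows "0 \<le> gU c x" "gU c x \<le> 2 / c"
proof -
  show "0 \<le> gU c x" using assms by (auto simp: gU_def)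
  show "gU c x \<le> 2 / c"
  proof (cases "c \<le> x")
    case True
    then have x0: "0 < x" using assms by simp
    have "1/x \<le> 1/c" using True assms by (simp add: frac_le)
    moreover have "c/x^2 \<le> 1/c"
    proof -
      have "c * c \<le> x^2" using True assms by (simp add: power2_eq_square mult_mono)
      then show ?thesis using x0 assms by (simp add: field_simps)
    qed
    ultimately show ?thesis using True by (simp add: gU_def)
  qed (use assms in \<open>simp add: gU_def\<close>)
qed

lemma gL_bnd: assumes "0 < c" shows "0 \<le> gL c x" "gL c x \<le> 2 / c" "gL c x \<le> gU c x"
  using assms by (auto simp: gL_def gU_def frac_le)

lemma one_minus_exp_ge: fixes t :: real assumes "0 \<le> t" "t \<le> 1" shows "t / 2 \<le> 1 - exp (- t)"
proof -
  have "1 + t \<le> exp t" using exp_ge_add_one_self[of t] by simp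
  then have "exp (- t) \<le> 1 / (1 + t)" using assms by (simp add: exp_minus field_simps)
  moreover have "t / 2 \<le> 1 - 1 / (1 + t)" using assms mult_left_le[of t t] by (simp add: field_simps)
  ultimately show ?thesis by linarith
qed

lemma recip_shift:
  fixes x m \<beta> :: real
  assumes "0 < m" "m \<le> \<beta>" "2 * \<beta> \<le> x"
  shows "1 / (x - m) \<le> 1 / x + 2 * \<beta> / x^2"
proof -
  have x0: "0 < x" "0 < x - m" using assms by auto
  have "2 * \<beta> * (2 * \<beta> - m) \<le> x * (2 * \<beta> - m)" using assms by (intro mult_right_mono) auto
  moreover have "0 \<le> \<beta> * (\<beta> - m)" using assms by simp
  ultimately have "x * x \<le> (x - m) * (x + 2 * \<beta>)" by (simp add: algebra_simps)
  then have "1 / (x - m) \<le> (x + 2 * \<beta>) / (x * x)" using x0 by (simp add: divide_simps mult.commute)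
  also have "\<dots> = 1 / x + 2 * \<beta> / x^2" using x0 by (simp add: field_simps power2_eq_square)
  finally show ?thesis .
qed

context expsample
begin

lemma E0_mono:
  assumes [measurable]: "f \<in> borel_measurable borel" "g \<in> borel_measurable borel"
    and "\<And>x. \<bar>f x\<bar> \<le> B" "\<And>x. \<bar>g x\<bar> \<le> B" "\<And>x. f x \<le> g x"
  shows "E0 f \<le> E0 g"
  unfolding E0_def
  by (rule integral_mono[OF integrable_E0[OF assms(1,3)] integrable_E0[OF assms(2,4)]])
     (simp add: assms(5) exponential_density_nonneg mult_left_mono)

lemma E0_gU': "0 < c \<Longrightarrow> c \<le> 1 \<Longrightarrow> E0 (gU c) \<le> 3 - ln c"
  unfolding gU_def by (rule E0_gU)
lemma E0_gL': "0 < c \<Longrightarrow> c \<le> 1 \<Longrightarrow> E0 (gL c) \<ge> - 1 - ln c"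
  unfolding gL_def by (rule E0_gL)

lemma E0_nonneg:
  assumes [measurable]: "f \<in> borel_measurable borel" and "\<And>x. 0 \<le> f x"
  shows "0 \<le> E0 f"
  unfolding E0_def by (rule integral_nonneg_AE) (simp add: assms(2) exponential_density_nonneg)

end



context expsample
begin

lemma key_bound:
  fixes n :: nat and \<epsilon> \<delta> h h2 :: real
  assumes ed: "\<epsilon> \<le> \<delta>" and n2: "2 \<le> n" and eps: "0 < \<epsilon>" "\<epsilon> \<le> 1/2" and h1: "1 \<le> h" and h2p: "0 < h2"
    and \<beta>4: "h / real n \<le> 1/4"
    and c1: "(1+\<epsilon>) * h2 < ln (real n)" and c2: "3/2 * (ln (2*h) + 1) < \<epsilon> * ln (real n) / 2"
    and c3: "3 + 3*h*h2 + h2 < 7/8 * \<epsilon> * ln (real n)"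
  shows "prob {\<omega>\<in>space M. \<delta> < \<bar>real n * ln (real n) * (smallest_critical_point (\<lambda>i. X i \<omega>) n - Min ((\<lambda>i. X i \<omega>) ` {..<n})) - 1\<bar>}
     \<le> 4/h + 4*(h*h2+2)/h2^2 + 128*(ln (real n)+3)/(\<epsilon>^2*h*(ln (real n))^2)"
proof -
  define ll where "ll = ln (real n)"
  define \<beta> where "\<beta> = h / real n"
  define g where "g = 1 / (real n * h2)"
  define L where "L = real n * ll"
  define J where "J = nat \<lceil>\<beta> / g\<rceil>"
  define p1 where "p1 = E0 (indicator {..\<beta>})"
  define p2 where "p2 = E0 (indicator {..2*\<beta>})"
  define \<mu>U where "\<mu>U = E0 (gU (2*\<beta>))"
  define \<mu>L where "\<mu>L = E0 (gL (2*\<beta>))"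
  have npos: "0 < real n" using n2 by simp
  have lpos: "0 < ll" using c1 eps h2p unfolding ll_def by (smt (verit) mult_pos_pos)
  have b0: "0 < \<beta>" unfolding \<beta>_def using h1 npos by simp
  have g0: "0 < g" unfolding g_def using h2p npos by simp
  have Lpos: "0 < L" unfolding L_def using npos lpos by simp
  have bg: "\<beta> / g = h * h2" unfolding \<beta>_def g_def using npos by (simp add: field_simps)
  have b14: "\<beta> \<le> 1/4" using \<beta>4 unfolding \<beta>_def .
  have nb: "real n * \<beta> = h" unfolding \<beta>_def using npos by simp
  have ng: "real n * g = 1 / h2" unfolding g_def using npos by simp
  have ln2h: "0 \<le> ln (2*h)" using h1 by simp
  have ln2b: "ln (2*\<beta>) = ln (2*h) - ll"
    unfolding \<beta>_def ll_def using npos h1 by (simp add: ln_div)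
  define N1 where "N1 \<omega> = (\<Sum>i<n. indicator {..\<beta>} (X i \<omega>) :: real)" for \<omega>
  define N2 where "N2 \<omega> = (\<Sum>i<n. indicator {..2*\<beta>} (X i \<omega>) :: real)" for \<omega>
  define U where "U \<omega> = (\<Sum>i<n. gU (2*\<beta>) (X i \<omega>))" for \<omega>
  define V where "V \<omega> = (\<Sum>i<n. gL (2*\<beta>) (X i \<omega>))" for \<omega>
  define A0 where "A0 = (\<Union>i\<in>{..<n}. {\<omega>\<in>space M. X i \<omega> \<le> 0})"
  define A1 where "A1 = {\<omega>\<in>space M. real n * p1 \<le> \<bar>N1 \<omega> - real n * p1\<bar>}"
  define Eb where "Eb j i i' = {\<omega>\<in>space M. ((real j - 1) * g < X i \<omega> \<and> X i \<omega> \<le> (real j + 1) * g) \<and>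
     ((real j - 1) * g < X i' \<omega> \<and> X i' \<omega> \<le> (real j + 1) * g)}" for j i i'
  define A2 where "A2 = (\<Union>j\<in>{..J}. \<Union>i\<in>{..<n}. \<Union>i'\<in>{..<n}-{i}. Eb j i i')"
  define A3 where "A3 = {\<omega>\<in>space M. h \<le> \<bar>N2 \<omega> - real n * p2\<bar>}"
  define A4 where "A4 = {\<omega>\<in>space M. \<epsilon> * L / 8 \<le> \<bar>U \<omega> - real n * \<mu>U\<bar>}"
  define A5 where "A5 = {\<omega>\<in>space M. \<epsilon> * L / 8 \<le> \<bar>V \<omega> - real n * \<mu>L\<bar>}"
  have mA0: "A0 \<in> sets M" unfolding A0_def by measurable
  have mA1: "A1 \<in> sets M" unfolding A1_def N1_def by measurable
  have mEb: "Eb j i i' \<in> sets M" for j i i' unfolding Eb_def by measurable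
  have mA2: "A2 \<in> sets M" unfolding A2_def using mEb by blast
  have mA3: "A3 \<in> sets M" unfolding A3_def N2_def by measurable
  have mA4: "A4 \<in> sets M" unfolding A4_def U_def by measurable
  have mA5: "A5 \<in> sets M" unfolding A5_def V_def by measurable
  have pA0: "prob A0 \<le> 0"
  proof -
    have "prob A0 \<le> (\<Sum>i<n. prob {\<omega>\<in>space M. X i \<omega> \<le> 0})"
      unfolding A0_def by (rule finite_measure_subadditive_finite) auto
    also have "\<dots> = 0" by (simp add: prob_le0)
    finally show ?thesis .
  qed
  have p1v: "p1 = 1 - exp (- \<beta>)" unfolding p1_def using b0 by (simp add: E0_ind)
  have p2v: "p2 = 1 - exp (- (2*\<beta>))" unfolding p2_def using b0 by (simp add: E0_ind)
  have p1lb: "\<beta> / 2 \<le> p1" unfolding p1v using b0 b14 by (intro one_minus_exp_ge) auto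
  have p2ub: "p2 \<le> 2 * \<beta>" unfolding p2v using b0 by (intro one_minus_exp_le) auto
  have p1pos: "0 < p1" using p1lb b0 by simp
  have p2nn: "0 \<le> p2" using p2v b0 by simp
  have pA1: "prob A1 \<le> 2 / h"
  proof -
    have "prob A1 \<le> real n * 1 * p1 / (real n * p1)^2"
      unfolding A1_def N1_def p1_def
      by (rule cheb_sum) (use npos p1pos in \<open>auto simp: p1_def\<close>)
    also have "\<dots> = 1 / (real n * p1)" using npos p1pos by (simp add: power2_eq_square)
    also have "\<dots> \<le> 1 / (real n * (\<beta> / 2))"
      using npos p1pos p1lb b0 by (intro divide_left_mono mult_left_mono mult_pos_pos) auto
    also have "\<dots> = 2 / h" using nb by (simp add: field_simps)
    finally show ?thesis .
  qed
  have pA3: "prob A3 \<le> 2 / h"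
  proof -
    have "prob A3 \<le> real n * 1 * p2 / h^2"
      unfolding A3_def N2_def p2_def
      by (rule cheb_sum) (use h1 in \<open>auto simp: p2_def\<close>)
    also have "\<dots> \<le> real n * (2 * \<beta>) / h^2"
      using npos p2ub by (intro divide_right_mono mult_left_mono) auto
    also have "\<dots> = 2 / h" using nb h1 by (simp add: field_simps power2_eq_square)
    finally show ?thesis .
  qed
  have c2b: "0 < 2 * \<beta>" "2 * \<beta> \<le> 1" using b0 b14 by auto
  have muU: "\<mu>U \<le> ll + 3" unfolding \<mu>U_def using E0_gU'[OF c2b] ln2b ln2h by simp
  have muL: "\<mu>L \<ge> ll - ln (2*h) - 1" unfolding \<mu>L_def using E0_gL'[OF c2b] ln2b by simp
  have muU0: "0 \<le> \<mu>U" unfolding \<mu>U_def by (rule E0_nonneg) (use gU_bnd c2b in auto)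
  have muLU: "\<mu>L \<le> \<mu>U" unfolding \<mu>L_def \<mu>U_def
    by (rule E0_mono[where B="2/(2*\<beta>)"]) (use gU_bnd[OF c2b(1)] gL_bnd[OF c2b(1)] in auto)
  have muL0: "0 \<le> \<mu>L" unfolding \<mu>L_def by (rule E0_nonneg) (use gL_bnd c2b in auto)
  have tpos: "0 < \<epsilon> * L / 8" using eps Lpos by simp
  have cheb_fin: "real n * (1/\<beta>) * \<mu> / (\<epsilon> * L / 8)^2 \<le> 64*(ll+3)/(\<epsilon>^2*h*ll^2)" if "0 \<le> \<mu>" "\<mu> \<le> ll + 3" for \<mu>
  proof -
    have "real n * (1/\<beta>) * \<mu> / (\<epsilon> * L / 8)^2 = 64 * \<mu> / (\<epsilon>^2 * h * ll^2)"
      unfolding L_def using npos b0 h1 lpos eps nb[symmetric] by (simp add: field_simps power2_eq_square)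
    also have "\<dots> \<le> 64*(ll+3)/(\<epsilon>^2*h*ll^2)"
      using that eps h1 lpos by (intro divide_right_mono) auto
    finally show ?thesis .
  qed
  have pA4: "prob A4 \<le> 64*(ll+3)/(\<epsilon>^2*h*ll^2)"
  proof -
    have "prob A4 \<le> real n * (2/(2*\<beta>)) * \<mu>U / (\<epsilon> * L / 8)^2"
      unfolding A4_def U_def \<mu>U_def
      by (rule cheb_sum) (use tpos gU_bnd[OF c2b(1)] in auto)
    also have "\<dots> \<le> 64*(ll+3)/(\<epsilon>^2*h*ll^2)" using cheb_fin[OF muU0 muU] b0 by simp
    finally show ?thesis .
  qed
  have pA5: "prob A5 \<le> 64*(ll+3)/(\<epsilon>^2*h*ll^2)"
  proof -
    have "prob A5 \<le> real n * (2/(2*\<beta>)) * \<mu>L / (\<epsilon> * L / 8)^2"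
      unfolding A5_def V_def \<mu>L_def
      by (rule cheb_sum) (use tpos gL_bnd[OF c2b(1)] in auto)
    also have "\<dots> \<le> 64*(ll+3)/(\<epsilon>^2*h*ll^2)" using cheb_fin[OF muL0] muLU muU b0 by simp
    finally show ?thesis .
  qed
  have pA2: "prob A2 \<le> 4*(h*h2+2)/h2^2"
  proof -
    have "prob A2 \<le> (\<Sum>j\<in>{..J}. prob (\<Union>i\<in>{..<n}. \<Union>i'\<in>{..<n}-{i}. Eb j i i'))"
      unfolding A2_def by (rule finite_measure_subadditive_finite) (use mEb in auto)
    also have "\<dots> \<le> (\<Sum>j\<in>{..J}. real n * (real n * (2*g)^2))"
    proof (rule sum_mono)
      fix j
      have "prob (\<Union>i\<in>{..<n}. \<Union>i'\<in>{..<n}-{i}. Eb j i i') \<le> (\<Sum>i<n. prob (\<Union>i'\<in>{..<n}-{i}. Eb j i i'))"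
        by (rule finite_measure_subadditive_finite) (use mEb in auto)
      also have "\<dots> \<le> (\<Sum>i<n. real n * (2*g)^2)"
      proof (rule sum_mono)
        fix i assume "i \<in> {..<n}"
        have "prob (\<Union>i'\<in>{..<n}-{i}. Eb j i i') \<le> (\<Sum>i'\<in>{..<n}-{i}. prob (Eb j i i'))"
          by (rule finite_measure_subadditive_finite) (use mEb in auto)
        also have "\<dots> \<le> (\<Sum>i'\<in>{..<n}-{i}. (2*g)^2)"
        proof (rule sum_mono)
          fix i' assume "i' \<in> {..<n}-{i}"
          then have "i \<noteq> i'" by auto
          have "prob (Eb j i i') \<le> ((real j + 1) * g - (real j - 1) * g)^2"
            unfolding Eb_def by (rule prob_pair[OF \<open>i \<noteq> i'\<close>]) (use g0 in \<open>simp add: mult_right_mono\<close>)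
          then show "prob (Eb j i i') \<le> (2*g)^2" by (simp add: algebra_simps)
        qed
        also have "\<dots> \<le> real n * (2*g)^2"
          using card_Diff1_le[of "{..<n}" i] by (simp add: mult_right_mono)
        finally show "prob (\<Union>i'\<in>{..<n}-{i}. Eb j i i') \<le> real n * (2*g)^2" .
      qed
      also have "\<dots> = real n * (real n * (2*g)^2)" by simp
      finally show "prob (\<Union>i\<in>{..<n}. \<Union>i'\<in>{..<n}-{i}. Eb j i i') \<le> real n * (real n * (2*g)^2)" .
    qed
    also have "\<dots> = (real J + 1) * (4 / h2^2)"
    proof -
      have "real n * (real n * (2*g)^2) = 4 * (real n * g)^2" by (simp add: power2_eq_square algebra_simps)
      also have "\<dots> = 4 / h2^2" using ng by (simp add: power_divide)
      finally show ?thesis by simp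
    qed
    also have "\<dots> \<le> (h*h2 + 2) * (4 / h2^2)"
    proof -
      have "real J < \<beta> / g + 1" unfolding J_def using b0 g0 ceiling_correct[of "\<beta>/g"]
        by (simp add: of_nat_nat)
      then show ?thesis using bg h2p by (intro mult_right_mono) auto
    qed
    finally show ?thesis by (simp add: algebra_simps)
  qed
  have sub: "{\<omega>\<in>space M. \<delta> < \<bar>real n * ln (real n) * (smallest_critical_point (\<lambda>i. X i \<omega>) n - Min ((\<lambda>i. X i \<omega>) ` {..<n})) - 1\<bar>}
     \<subseteq> A0 \<union> A1 \<union> A2 \<union> A3 \<union> A4 \<union> A5"
  proof
    fix \<omega> assume \<omega>: "\<omega> \<in> {\<omega>\<in>space M. \<delta> < \<bar>real n * ln (real n) * (smallest_critical_point (\<lambda>i. X i \<omega>) n - Min ((\<lambda>i. X i \<omega>) ` {..<n})) - 1\<bar>}"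
    show "\<omega> \<in> A0 \<union> A1 \<union> A2 \<union> A3 \<union> A4 \<union> A5"
    proof (rule ccontr)
      assume nA: "\<omega> \<notin> A0 \<union> A1 \<union> A2 \<union> A3 \<union> A4 \<union> A5"
      have sp: "\<omega> \<in> space M" using \<omega> by simp
      define x where "x i = X i \<omega>" for i
      have xpos: "0 < x i" if "i < n" for i using nA sp that unfolding A0_def x_def by force
      have N1pos: "0 < N1 \<omega>" using nA sp npos p1pos unfolding A1_def by auto
      obtain i0 where i0: "i0 < n" "x i0 \<le> \<beta>"
      proof (rule ccontr)
        assume "\<not> thesis"
        then have "\<forall>i<n. \<not> x i \<le> \<beta>" using that by blast
        then have "N1 \<omega> = 0" unfolding N1_def x_def by (intro sum.neutral) auto
        with N1pos show False by simp
      qed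
      define m where "m = Min (x ` {..<n})"
      have fin: "finite (x ` {..<n})" "x ` {..<n} \<noteq> {}" using n2 by (auto simp: lessThan_empty_iff)
      have "m \<in> x ` {..<n}" unfolding m_def using fin by (rule Min_in)
      then obtain k where k: "k < n" "x k = m" by auto
      have mle: "m \<le> x i" if "i < n" for i unfolding m_def using fin that by auto
      have mb: "m \<le> \<beta>" using mle[OF i0(1)] i0(2) by simp
      have m0: "0 < m" using xpos[OF k(1)] k(2) by simp
      have sep: "m + g \<le> x i" if "i < n" "i \<noteq> k" for i
      proof (rule ccontr)
        assume "\<not> m + g \<le> x i"
        then have xi: "x i < m + g" by simp
        define q where "q = \<lceil>m / g\<rceil>"
        have q1: "of_int q - 1 < m / g" "m / g \<le> of_int q" unfolding q_def using ceiling_correct by auto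
        have qpos: "0 \<le> q" using q1 m0 g0 by (smt (verit) divide_pos_pos of_int_less_0_iff)
        define j where "j = nat q"
        have rj: "real j = of_int q" unfolding j_def using qpos by simp
        have lo: "(real j - 1) * g < m" using q1 g0 rj by (simp add: field_simps)
        have hi: "m \<le> real j * g" using q1 g0 rj by (simp add: field_simps)
        have jJ: "j \<le> J" unfolding j_def J_def q_def
          using mb g0 by (intro nat_mono ceiling_mono divide_right_mono) auto
        have "\<omega> \<in> Eb j k i"
          unfolding Eb_def using sp lo hi xi mle[OF that(1)] k g0
          by (auto simp: x_def algebra_simps)
        then have "\<omega> \<in> A2" unfolding A2_def using jJ k that by blast
        with nA show False by blast
      qed
      have N2nn: "0 \<le> N2 \<omega>" unfolding N2_def by (intro sum_nonneg) auto
      have N2b: "N2 \<omega> < 3 * h"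
      proof -
        have "N2 \<omega> < real n * p2 + h" using nA sp unfolding A3_def by auto
        moreover have "real n * p2 \<le> 2 * h"
        proof -
          have "real n * p2 \<le> real n * (2*\<beta>)" using p2ub npos by (simp add: mult_left_mono)
          then show ?thesis using nb by (simp add: algebra_simps)
        qed
        ultimately show ?thesis by simp
      qed
      have Ub: "U \<omega> \<le> real n * (ll + 3) + \<epsilon> * L / 8"
      proof -
        have "\<not> (\<epsilon> * L / 8 \<le> \<bar>U \<omega> - real n * \<mu>U\<bar>)" using nA sp unfolding A4_def by blast
        then have "U \<omega> < real n * \<mu>U + \<epsilon> * L / 8" by linarith
        moreover have "real n * \<mu>U \<le> real n * (ll + 3)" using muU npos by simp
        ultimately show ?thesis by simp
      qed
      have Vb: "real n * (ll - ln (2*h) - 1) - \<epsilon> * L / 8 \<le> V \<omega>"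
      proof -
        have "\<not> (\<epsilon> * L / 8 \<le> \<bar>V \<omega> - real n * \<mu>L\<bar>)" using nA sp unfolding A5_def by blast
        then have "real n * \<mu>L - \<epsilon> * L / 8 < V \<omega>" by linarith
        moreover have "real n * (ll - ln (2*h) - 1) \<le> real n * \<mu>L" using muL npos by simp
        ultimately show ?thesis by simp
      qed
      define S where "S = (\<Sum>i\<in>{..<n}-{k}. 1 / (x i - m))"
      have SV: "V \<omega> \<le> S"
      proof -
        have "V \<omega> = gL (2*\<beta>) (x k) + (\<Sum>i\<in>{..<n}-{k}. gL (2*\<beta>) (x i))"
          unfolding V_def x_def using k by (simp add: sum.remove)
        also have "gL (2*\<beta>) (x k) = 0" using k mb b0 by (simp add: gL_def)
        also have "(\<Sum>i\<in>{..<n}-{k}. gL (2*\<beta>) (x i)) \<le> S" unfolding S_def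
        proof (rule sum_mono)
          fix i assume i: "i \<in> {..<n}-{k}"
          then have "m + g \<le> x i" using sep by auto
          then show "gL (2*\<beta>) (x i) \<le> 1 / (x i - m)"
            using m0 g0 by (auto simp: gL_def intro!: frac_le)
        qed
        finally show ?thesis by simp
      qed
      have SU: "S \<le> U \<omega> + N2 \<omega> / g"
      proof -
        have "S \<le> (\<Sum>i\<in>{..<n}-{k}. gU (2*\<beta>) (x i) + indicator {..2*\<beta>} (x i) / g)"
          unfolding S_def
        proof (rule sum_mono)
          fix i assume i: "i \<in> {..<n}-{k}"
          then have xi: "m + g \<le> x i" using sep by auto
          show "1 / (x i - m) \<le> gU (2*\<beta>) (x i) + indicator {..2*\<beta>} (x i) / g"
          proof (cases "2*\<beta> \<le> x i")
            case True
            have "1 / (x i - m) \<le> 1 / x i + 2 * \<beta> / (x i)^2" by (rule recip_shift) (use m0 mb True in auto)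
            then have "1 / (x i - m) \<le> gU (2*\<beta>) (x i)" using True by (simp add: gU_def)
            moreover have "0 \<le> indicator {..2*\<beta>} (x i) / g" using g0 by simp
            ultimately show ?thesis by linarith
          next
            case False
            have "1 / (x i - m) \<le> 1 / g" using xi g0 by (intro frac_le) auto
            moreover have "0 \<le> gU (2*\<beta>) (x i)" using gU_bnd c2b by simp
            ultimately show ?thesis using False by (simp add: indicator_def)
          qed
        qed
        also have "\<dots> \<le> (\<Sum>i<n. gU (2*\<beta>) (x i) + indicator {..2*\<beta>} (x i) / g)"
          by (rule sum_mono2) (use gU_bnd c2b g0 in auto)
        also have "\<dots> = U \<omega> + N2 \<omega> / g"
          unfolding U_def N2_def x_def by (simp add: sum.distrib sum_divide_distrib)
        finally show ?thesis .
      qed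
      define a where "a = (1 - \<epsilon>) / L"
      define b where "b = (1 + \<epsilon>) / L"
      have a0: "0 < a" unfolding a_def using eps Lpos by simp
      have ab: "a < b" unfolding a_def b_def using eps Lpos by (simp add: divide_strict_right_mono)
      have bg': "b < g"
      proof -
        have "real n * ((1 + \<epsilon>) * h2) < real n * ll" using c1 npos unfolding ll_def
          by (intro mult_strict_left_mono) auto
        then have "(1 + \<epsilon>) * (real n * h2) < L" unfolding L_def by (simp add: algebra_simps)
        then show ?thesis unfolding b_def g_def using Lpos npos h2p by (simp add: field_simps)
      qed
      have upS: "1 < b * S"
      proof -
        define D where "D = ln (2*h) + 1"
        have D0: "0 \<le> D" unfolding D_def using ln2h by simp
        have "real n * (ll - D) = real n * (ll - ln (2*h) - 1)" unfolding D_def by simp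
        then have "real n * (ll - D) - \<epsilon> * L / 8 \<le> S" using Vb SV by linarith
        then have "b * (real n * (ll - D) - \<epsilon> * L / 8) \<le> b * S"
          using a0 ab by (intro mult_left_mono) auto
        moreover have "b * (real n * (ll - D) - \<epsilon> * L / 8) = (1 + \<epsilon>) * (ll - D - \<epsilon> * ll / 8) / ll"
          unfolding b_def L_def using npos lpos by (simp add: field_simps)
        moreover have "ll < (1 + \<epsilon>) * (ll - D - \<epsilon> * ll / 8)"
        proof -
          have e1: "\<epsilon> * (\<epsilon> * ll) \<le> 1/2 * (\<epsilon> * ll)" using eps lpos by (intro mult_right_mono) auto
          have e2: "\<epsilon> * D \<le> 1/2 * D" using eps D0 by (intro mult_right_mono) auto
          have "(1 + \<epsilon>) * (ll - D - \<epsilon> * ll / 8) = ll + 7/8 * (\<epsilon> * ll) - 1/8 * (\<epsilon> * (\<epsilon> * ll)) - D - \<epsilon> * D"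
            by (simp add: field_simps)
          moreover have c2': "3/2 * D < (\<epsilon> * ll) / 2" using c2 unfolding D_def ll_def by simp
          moreover have "0 < \<epsilon> * ll" using eps lpos by simp
          ultimately show ?thesis using e1 e2 by linarith
        qed
        then have "1 < (1 + \<epsilon>) * (ll - D - \<epsilon> * ll / 8) / ll" using lpos by simp
        ultimately show ?thesis by linarith
      qed
      have lowS: "a * S < 1 - a / g"
      proof -
        define R where "R = 3 + 3*h*h2 + h2"
        have R0: "0 \<le> R" unfolding R_def using h1 h2p by simp
        have "S \<le> real n * (ll + 3) + \<epsilon> * L / 8 + 3 * h * (real n * h2)"
        proof -
          have "N2 \<omega> / g \<le> 3 * h / g" using N2b g0 by (simp add: divide_right_mono)
          also have "3 * h / g = 3 * h * (real n * h2)" unfolding g_def by simp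
          finally show ?thesis using SU Ub by simp
        qed
        then have "a * S \<le> a * (real n * (ll + 3) + \<epsilon> * L / 8 + 3 * h * (real n * h2))"
          using a0 by (simp add: mult_left_mono)
        also have "\<dots> = (1 - \<epsilon>) * (ll + 3 + \<epsilon> * ll / 8 + 3 * h * h2) / ll"
          unfolding a_def L_def using npos lpos by (simp add: field_simps)
        finally have aS: "a * S \<le> (1 - \<epsilon>) * (ll + 3 + \<epsilon> * ll / 8 + 3 * h * h2) / ll" .
        have ag: "a / g = (1 - \<epsilon>) * h2 / ll" unfolding a_def g_def L_def using npos lpos h2p by (simp add: field_simps)
        have key: "(1 - \<epsilon>) * (ll + 3 + \<epsilon> * ll / 8 + 3 * h * h2) + (1 - \<epsilon>) * h2 < ll"
        proof -
          have "(1 - \<epsilon>) * (ll + 3 + \<epsilon> * ll / 8 + 3 * h * h2) + (1 - \<epsilon>) * h2 =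
              ll - 7/8 * (\<epsilon> * ll) - 1/8 * (\<epsilon> * (\<epsilon> * ll)) + R - \<epsilon> * R"
            unfolding R_def by (simp add: field_simps)
          moreover have "0 \<le> \<epsilon> * (\<epsilon> * ll)" "0 \<le> \<epsilon> * R" using eps lpos R0 by auto
          ultimately show ?thesis using c3 unfolding R_def ll_def by linarith
        qed
        have "((1 - \<epsilon>) * (ll + 3 + \<epsilon> * ll / 8 + 3 * h * h2) + (1 - \<epsilon>) * h2) / ll < 1"
          using key lpos by (simp add: pos_divide_less_eq)
        then have "(1 - \<epsilon>) * (ll + 3 + \<epsilon> * ll / 8 + 3 * h * h2) / ll + (1 - \<epsilon>) * h2 / ll < 1"
          by (simp add: add_divide_distrib)
        with aS ag show ?thesis by linarith
      qed
      have cp: "m + a < smallest_critical_point x n \<and> smallest_critical_point x n \<le> m + b"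
        by (rule crit_point[OF k sep a0 ab bg' S_def lowS upS])
      have "L * a = 1 - \<epsilon>" "L * b = 1 + \<epsilon>" unfolding a_def b_def using Lpos by auto
      then have "1 - \<epsilon> < L * (smallest_critical_point x n - m)" "L * (smallest_critical_point x n - m) \<le> 1 + \<epsilon>"
        using cp Lpos by (smt (verit) mult_strict_left_mono mult_left_mono)+
      then have "\<bar>L * (smallest_critical_point x n - m) - 1\<bar> \<le> \<epsilon>" by simp
      moreover have "L = real n * ln (real n)" unfolding L_def ll_def ..
      moreover have "(\<lambda>i. X i \<omega>) = x" unfolding x_def ..
      moreover have "Min ((\<lambda>i. X i \<omega>) ` {..<n}) = m" unfolding m_def x_def ..
      ultimately show False using \<omega> ed by auto
    qed
  qed
  have "prob {\<omega>\<in>space M. \<delta> < \<bar>real n * ln (real n) * (smallest_critical_point (\<lambda>i. X i \<omega>) n - Min ((\<lambda>i. X i \<omega>) ` {..<n})) - 1\<bar>}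
     \<le> prob (A0 \<union> A1 \<union> A2 \<union> A3 \<union> A4 \<union> A5)"
    by (rule finite_measure_mono[OF sub]) (use mA0 mA1 mA2 mA3 mA4 mA5 in auto)
  also have "\<dots> \<le> prob A0 + prob A1 + prob A2 + prob A3 + prob A4 + prob A5"
    using mA0 mA1 mA2 mA3 mA4 mA5
    by (smt (verit) measure_Un_le sets.Un)
  also have "\<dots> \<le> 0 + 2/h + 4*(h*h2+2)/h2^2 + 2/h + 64*(ll+3)/(\<epsilon>^2*h*ll^2) + 64*(ll+3)/(\<epsilon>^2*h*ll^2)"
    using pA0 pA1 pA2 pA3 pA4 pA5 by linarith
  finally have fin: "prob {\<omega>\<in>space M. \<delta> < \<bar>real n * ln (real n) * (smallest_critical_point (\<lambda>i. X i \<omega>) n - Min ((\<lambda>i. X i \<omega>) ` {..<n})) - 1\<bar>}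
     \<le> 0 + 2/h + 4*(h*h2+2)/h2^2 + 2/h + 64*(ll+3)/(\<epsilon>^2*h*ll^2) + 64*(ll+3)/(\<epsilon>^2*h*ll^2)" .
  have gen: "\<And>P A B C::real. P \<le> 0 + A + B + A + C + C \<Longrightarrow> P \<le> 2*A + B + 2*C" by linarith
  from gen[OF fin] show ?thesis unfolding ll_def by simp
qed

end



lemma asym1: "eventually (\<lambda>n::nat. 3/2 * ln (real n) powr (1/4) < ln (real n)) sequentially" by real_asymp
lemma asym2: "(\<lambda>n::nat. (ln (2 * ln (real n) powr (1/8)) + 1) / ln (real n)) \<longlonglongrightarrow> 0" by real_asymp
lemma asym3: "(\<lambda>n::nat. (3 + 3 * ln (real n) powr (1/8) * ln (real n) powr (1/4) + ln (real n) powr (1/4)) / ln (real n)) \<longlonglongrightarrow> 0" by real_asymp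
lemma asym4: "eventually (\<lambda>n::nat. 1 \<le> ln (real n) powr (1/8)) sequentially" by real_asymp
lemma asym5: "eventually (\<lambda>n::nat. ln (real n) powr (1/8) / real n \<le> 1/4) sequentially" by real_asymp
lemma asym6: "(\<lambda>n::nat. 4 / ln (real n) powr (1/8) + 4 * (ln (real n) powr (1/8) * ln (real n) powr (1/4) + 2) / (ln (real n) powr (1/4))^2) \<longlonglongrightarrow> 0" by real_asymp
lemma asym7: "(\<lambda>n::nat. (ln (real n) + 3) / (ln (real n) powr (1/8) * (ln (real n))^2)) \<longlonglongrightarrow> 0" by real_asymp
lemma asym8: "eventually (\<lambda>n::nat. 0 < ln (real n)) sequentially" by real_asymp
lemma asym9: "eventually (\<lambda>n::nat. 0 < ln (real n) powr (1/4)) sequentially" by real_asymp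

theorem mainTheorem16:
  fixes M :: "'a measure" and X :: "nat \<Rightarrow> 'a \<Rightarrow> real"
  assumes "prob_space M"
    and "prob_space.indep_vars M (\<lambda>_. borel) X UNIV"
    and "\<And>i. distributed M lborel (X i) (exponential_density 1)"
  shows "\<forall>\<epsilon>>0. (\<lambda>n. measure M {\<omega> \<in> space M.
            \<bar>real n * ln (real n) * (smallest_critical_point (\<lambda>i. X i \<omega>) n
               - Min ((\<lambda>i. X i \<omega>) ` {..<n})) - 1\<bar> > \<epsilon>}) \<longlonglongrightarrow> 0"
proof -
  interpret E: expsample M X
    using assms by (simp add: expsample_def expsample_axioms_def)
  show ?thesis
  proof (intro allI impI)
    fix \<epsilon> :: real assume \<epsilon>: "\<epsilon> > 0"
    define e where "e = min \<epsilon> (1/2)"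
    have e: "0 < e" "e \<le> 1/2" "e \<le> \<epsilon>" unfolding e_def using \<epsilon> by auto
    define h where "h n = ln (real n) powr (1/8)" for n :: nat
    define h2 where "h2 n = ln (real n) powr (1/4)" for n :: nat
    define bnd where "bnd n = 4/h n + 4*(h n*h2 n+2)/(h2 n)^2 + 128*(ln (real n)+3)/(e^2*h n*(ln (real n))^2)" for n
    have lim: "bnd \<longlonglongrightarrow> 0"
    proof -
      have "(\<lambda>n. (4/h n + 4*(h n*h2 n+2)/(h2 n)^2) + (128/e^2) * ((ln (real n)+3)/(h n*(ln (real n))^2))) \<longlonglongrightarrow> 0 + (128/e^2) * 0"
        unfolding h_def h2_def by (intro tendsto_intros asym6 asym7)
      moreover have "bnd = (\<lambda>n. (4/h n + 4*(h n*h2 n+2)/(h2 n)^2) + (128/e^2) * ((ln (real n)+3)/(h n*(ln (real n))^2)))"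
        unfolding bnd_def by (rule ext) simp
      ultimately show ?thesis by simp
    qed
    have ev3: "eventually (\<lambda>n. (ln (2 * h n) + 1) / ln (real n) < e / 3) sequentially"
      using order_tendstoD(2)[OF asym2, of "e/3"] e unfolding h_def by simp
    have ev4: "eventually (\<lambda>n. (3 + 3 * h n * h2 n + h2 n) / ln (real n) < 7/8 * e) sequentially"
      using order_tendstoD(2)[OF asym3, of "7/8 * e"] e unfolding h_def h2_def by simp
    have ev: "eventually (\<lambda>n. measure M {\<omega> \<in> space M.
            \<bar>real n * ln (real n) * (smallest_critical_point (\<lambda>i. X i \<omega>) n
               - Min ((\<lambda>i. X i \<omega>) ` {..<n})) - 1\<bar> > \<epsilon>} \<le> bnd n) sequentially"
      using eventually_ge_at_top[of 2] asym1 asym4 asym5 asym8 asym9 ev3 ev4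
    proof eventually_elim
      case (elim n)
      have l0: "0 < ln (real n)" using elim by simp
      have hh: "1 \<le> h n" "0 < h2 n" "h n / real n \<le> 1/4" using elim unfolding h_def h2_def by auto
      have c1: "(1+e) * h2 n < ln (real n)"
      proof -
        have "(1+e) * h2 n \<le> 3/2 * h2 n" using e hh by (intro mult_right_mono) auto
        moreover have "3/2 * h2 n < ln (real n)" using elim(2) unfolding h2_def by simp
        ultimately show ?thesis by linarith
      qed
      have c2: "3/2 * (ln (2*h n) + 1) < e * ln (real n) / 2"
      proof -
        have "ln (2 * h n) + 1 < e / 3 * ln (real n)" using elim(7) l0 by (simp add: divide_less_eq)
        then show ?thesis by simp
      qed
      have c3: "3 + 3*h n*h2 n + h2 n < 7/8 * e * ln (real n)"
        using elim(8) l0 by (simp add: divide_less_eq)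
      have "measure M {\<omega> \<in> space M. \<epsilon> < \<bar>real n * ln (real n) * (smallest_critical_point (\<lambda>i. X i \<omega>) n
               - Min ((\<lambda>i. X i \<omega>) ` {..<n})) - 1\<bar>} \<le> bnd n"
        unfolding bnd_def
        using E.key_bound[OF e(3) elim(1) e(1,2) hh(1,2,3) c1 c2 c3] by simp
      then show ?case by simp
    qed
    show "(\<lambda>n. measure M {\<omega> \<in> space M.
            \<bar>real n * ln (real n) * (smallest_critical_point (\<lambda>i. X i \<omega>) n
               - Min ((\<lambda>i. X i \<omega>) ` {..<n})) - 1\<bar> > \<epsilon>}) \<longlonglongrightarrow> 0"
      by (rule tendsto_sandwich[OF _ ev tendsto_const lim]) simp
  qed
qed


end
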